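(* Let $r,n\ge1$ and let $q\ge0$ be a real parameter. Then for every $w\in W_{r,n}$, $$(rq+1)^{\ell_n(w)}=\sum_{j=0}^n\binom{q+n-j}{n}\phi^n_j(w),$$ where $\binom{x}{n}=\frac{x(x-1)\cdots(x-n+1)}{n!}$ is the generalized binomial coefficient.
   Context: $W_{r,n}=\mathbb{Z}_r\wr\mathfrak{S}_n$ is the group of $r$-colored permutations $w=w(1)^{c_1}\cdots w(n)^{c_n}$ ($w(1)\cdots w(n)\in\mathfrak S_n$, $c_i\in\{0,\dots,r-1\}$). $\ell_n(w)$ is the number of cycles of the permutation $w(1)\cdots w(n)$ whose color (sum mod $r$ of the colors $c_i$ of its entries) is $0$. Set $\chi^n_k(w)=(rk+1)^{\ell_n(w)}$ for integers $k\ge0$ and define the Foulkes characters $\phi^n_j=\sum_{i=0}^j(-1)^i\binom{n+1}{i}\chi^n_{j-i}$, $j=0,\dots,n$. *)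

theory Defs
  imports Complex_Main "HOL-Combinatorics.Permutations" "HOL-Combinatorics.Orbits"
begin

text \<open>An r-colored permutation of {1..n} is a pair (sigma, c): sigma a permutation
of {1..n}, c assigns to each entry i in {1..n} a colour c i in {0..r-1}
(and is 0 outside {1..n}, so the representation is unique).\<close>

definition colored_perms :: "nat \<Rightarrow> nat \<Rightarrow> ((nat \<Rightarrow> nat) \<times> (nat \<Rightarrow> nat)) set" where
  "colored_perms r n = {(\<sigma>, c). \<sigma> permutes {1..n} \<and> (\<forall>i\<in>{1..n}. c i < r)
                                 \<and> (\<forall>i. i \<notin> {1..n} \<longrightarrow> c i = 0)}"

definition perm_cycles :: "nat \<Rightarrow> (nat \<Rightarrow> nat) \<Rightarrow> nat set set" where
  "perm_cycles n \<sigma> = (\<lambda>i. orbit \<sigma> i) ` {1..n}"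

definition ell :: "nat \<Rightarrow> nat \<Rightarrow> (nat \<Rightarrow> nat) \<times> (nat \<Rightarrow> nat) \<Rightarrow> nat" where
  "ell r n w = card {C \<in> perm_cycles n (fst w). (\<Sum>i\<in>C. snd w i) mod r = 0}"

definition chi :: "nat \<Rightarrow> nat \<Rightarrow> nat \<Rightarrow> (nat \<Rightarrow> nat) \<times> (nat \<Rightarrow> nat) \<Rightarrow> real" where
  "chi r n k w = (real (r * k + 1)) ^ ell r n w"

definition foulkes :: "nat \<Rightarrow> nat \<Rightarrow> nat \<Rightarrow> (nat \<Rightarrow> nat) \<times> (nat \<Rightarrow> nat) \<Rightarrow> real" where
  "foulkes r n j w = (\<Sum>i=0..j. (-1) ^ i * real ((n + 1) choose i) * chi r n (j - i) w)"

end

theory Submission imports Defs "HOL-Computational_Algebra.Computational_Algebra" begin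

lemma one_minus_X_mult_nth:
  "((1 - fps_X) * G :: real fps) $ k = G $ k - (if k = 0 then 0 else G $ (k - 1))"
  by (simp add: algebra_simps)

lemma pow_nth: "((1 - fps_X) ^ N :: real fps) $ i = (-1) ^ i * real (N choose i)"
proof (induction N arbitrary: i)
  case 0 then show ?case by simp
next
  case (Suc N)
  show ?case
  proof (cases i)
    case 0 then show ?thesis using Suc by (simp add: one_minus_X_mult_nth)
  next
    case (Suc k)
    then show ?thesis using Suc.IH by (simp add: one_minus_X_mult_nth algebra_simps)
  qed
qed

lemma B_lemma: "((1 - fps_X) ^ Suc n * Abs_fps (\<lambda>k. real ((k + n) choose n)) :: real fps) = 1"
proof (induction n)
  case 0
  show ?case by (rule fps_ext) (simp add: one_minus_X_mult_nth)
next
  case (Suc n)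
  have "(1 - fps_X) * Abs_fps (\<lambda>k. real ((k + Suc n) choose Suc n)) = Abs_fps (\<lambda>k. real ((k + n) choose n))"
  proof (rule fps_ext)
    fix k show "((1 - fps_X) * Abs_fps (\<lambda>k. real ((k + Suc n) choose Suc n))) $ k = Abs_fps (\<lambda>k. real ((k + n) choose n)) $ k"
      by (cases k) (auto simp: one_minus_X_mult_nth)
  qed
  then show ?case using Suc.IH
    by (metis (no_types, lifting) mult.assoc power_Suc2)
qed

lemma inversion:
  fixes f :: "nat \<Rightarrow> real"
  shows "f m = (\<Sum>j=0..m. (\<Sum>i=0..j. (-1)^i * real ((n+1) choose i) * f (j - i)) * real ((m - j + n) choose n))"
proof -
  define F where "F = Abs_fps f"
  define B where "B = Abs_fps (\<lambda>k. real ((k + n) choose n))"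
  have "F $ m = (F * ((1 - fps_X) ^ Suc n * B)) $ m" by (simp only: B_def B_lemma mult_1_right)
  also have "\<dots> = (((1 - fps_X) ^ Suc n * F) * B) $ m" by (simp only: mult_ac)
  also have "\<dots> = (\<Sum>j=0..m. (\<Sum>i=0..j. (-1)^i * real ((n+1) choose i) * f (j - i)) * real ((m - j + n) choose n))"
    unfolding fps_mult_nth pow_nth F_def B_def fps_nth_Abs_fps by (simp only: mult.assoc Suc_eq_plus1)
  finally show ?thesis by (simp add: F_def)
qed

lemma ell_le: "ell r n w \<le> n"
proof -
  have "ell r n w \<le> card (perm_cycles n (fst w))"
    unfolding ell_def perm_cycles_def by (intro card_mono) auto
  also have "\<dots> \<le> n" unfolding perm_cycles_def
    using card_image_le[of "{1..n}" "\<lambda>i. orbit (fst w) i"] by simp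
  finally show ?thesis .
qed

theorem mainTheorem8:
  fixes r n :: nat and q :: real and w :: "(nat \<Rightarrow> nat) \<times> (nat \<Rightarrow> nat)"
  assumes "r \<ge> 1" and "n \<ge> 1" and "q \<ge> 0" and "w \<in> colored_perms r n"
  shows "(real r * q + 1) ^ ell r n w
           = (\<Sum>j=0..n. ((q + real n - real j) gchoose n) * foulkes r n j w)"
proof -
  define L where "L = ell r n w"
  define a where "a j = foulkes r n j w" for j
  define P1 :: "real poly" where "P1 = [:1, real r:] ^ L"
  define P2 :: "real poly" where "P2 = (\<Sum>j=0..n. smult (a j / fact n) (\<Prod>i=0..<n. [:real n - real j - real i, 1:]))"
  have LE: "L \<le> n" unfolding L_def by (rule ell_le)
  have ev1: "poly P1 x = (real r * x + 1) ^ L" for x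
    by (simp add: P1_def algebra_simps)
  have ev2: "poly P2 x = (\<Sum>j=0..n. ((x + real n - real j) gchoose n) * a j)" for x
    by (simp add: P2_def poly_sum poly_prod gbinomial_prod_rev algebra_simps)
  have d1: "degree P1 \<le> n"
  proof -
    have "degree P1 \<le> degree [:1, real r:] * L" unfolding P1_def by (rule degree_power_le)
    also have "\<dots> \<le> L" by simp
    finally show ?thesis using LE by simp
  qed
  have d2: "degree P2 \<le> n"
    unfolding P2_def
  proof (intro degree_sum_le)
    fix j assume "j \<in> {0..n}"
    have "degree (\<Prod>i=0..<n. [:real n - real j - real i, 1:]) \<le> (\<Sum>i=0..<n. degree [:real n - real j - real i, 1:])"
      using degree_prod_sum_le[of "{0..<n}" "\<lambda>i. [:real n - real j - real i, 1:]"] by (simp add: o_def)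
    also have "\<dots> \<le> n" by simp
    finally show "degree (smult (a j / fact n) (\<Prod>i=0..<n. [:real n - real j - real i, 1:])) \<le> n"
      by (rule order_trans[OF degree_smult_le])
  qed simp
  have eq: "P1 = P2"
  proof (rule poly_eqI_degree[of "real ` {0..n}"])
    show "card (real ` {0..n}) > degree P1" "card (real ` {0..n}) > degree P2"
      using d1 d2 by (simp_all add: card_image inj_on_def)
  next
    fix x assume "x \<in> real ` {0..n}"
    then obtain m where m: "m \<le> n" "x = real m" by auto
    define f where "f k = chi r n k w" for k
    have rm: "real (r * m + 1) = real r * real m + 1" by simp
    have "poly P1 x = f m" unfolding ev1 f_def chi_def L_def m(2) rm by (rule refl)
    also have "\<dots> = (\<Sum>j=0..m. (\<Sum>i=0..j. (-1)^i * real ((n+1) choose i) * f (j - i)) * real ((m - j + n) choose n))"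
      by (rule inversion)
    also have "\<dots> = (\<Sum>j=0..m. real ((m + n - j) choose n) * a j)"
      by (intro sum.cong) (auto simp: a_def foulkes_def f_def)
    also have "\<dots> = (\<Sum>j=0..n. real ((m + n - j) choose n) * a j)"
    proof -
      have sp: "{0..n} = {0..m} \<union> {Suc m..n}" using m(1) by auto
      have "(\<Sum>j=0..n. real ((m + n - j) choose n) * a j) = (\<Sum>j=0..m. real ((m + n - j) choose n) * a j) + (\<Sum>j=Suc m..n. real ((m + n - j) choose n) * a j)"
        unfolding sp by (rule sum.union_disjoint) auto
      also have "(\<Sum>j=Suc m..n. real ((m + n - j) choose n) * a j) = 0"
        by (intro sum.neutral ballI) (auto simp: binomial_eq_0)
      finally show ?thesis by simp
    qed
    also have "\<dots> = poly P2 x"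
      unfolding ev2 m(2)
    proof (intro sum.cong refl)
      fix j assume "j \<in> {0..n}"
      then have "real m + real n - real j = real (m + n - j)" by simp
      then show "real ((m + n - j) choose n) * a j = ((real m + real n - real j) gchoose n) * a j"
        unfolding binomial_gbinomial by (simp only:)
    qed
    finally show "poly P1 x = poly P2 x" .
  qed
  have "(real r * q + 1) ^ ell r n w = poly P1 q" by (simp add: ev1 L_def)
  also have "\<dots> = poly P2 q" using eq by simp
  also have "\<dots> = (\<Sum>j=0..n. ((q + real n - real j) gchoose n) * foulkes r n j w)"
    by (simp add: ev2 a_def)
  finally show ?thesis .
qed

end
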